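(* Let $\mathbb{D}$ be $[0,1]^2$ or a mesh and let $A,B:\mathbb{D}\to\mathbb{R}$ satisfy (Q1) $A\le B$ and (Q2) $L^{(A,B)}(R)\ge0$ for all $R\in\mathfrak{R}$. Then for all $\mathbf{x}\in\mathbb{D}$, $$P_M^{(A,B)}(\mathbf{x})+P_O^{(A,B)}(\mathbf{x})\ge B(\mathbf{x})-A(\mathbf{x}).$$
   Context: A rectangle is $[s_1,s_2]\times[t_1,t_2]$ with $s_1<s_2$, $t_1<t_2$ and corners in $\mathbb{D}$; main corners: southwest and northeast; opposite corners: southeast and northwest. $\mathfrak{R}$ is the set of finite formal unions $R=R_1\sqcup\dots\sqcup R_n$ of rectangles (repetitions allowed), with multiplicity $m_R(\mathbf{y})=\sum_i m_{R_i}(\mathbf{y})$, where $m_{R_i}(\mathbf{y})$ is $1$ at main corners, $-1$ at opposite corners, $0$ elsewhere. $L^{(A,B)}(R)=\sum_{m_R(\mathbf{y})>0}B(\mathbf{y})m_R(\mathbf{y})+\sum_{m_R(\mathbf{y})<0}A(\mathbf{y})m_R(\mathbf{y})$; $P_M^{(A,B)}(\mathbf{x})=\inf\{L^{(A,B)}(R)/m_R(\mathbf{x}):m_R(\mathbf{x})>0\}$; $P_O^{(A,B)}(\mathbf{x})=\inf\{L^{(A,B)}(R)/(-m_R(\mathbf{x})):m_R(\mathbf{x})<0\}$, infima over $R\in\mathfrak{R}$ and $\inf\emptyset=+\infty$. *)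

theory Defs
  imports "HOL-Analysis.Analysis" "HOL-Library.Extended_Real"
begin

type_synonym point = "real \<times> real"

text \<open>A rectangle [s1,s2] x [t1,t2] is encoded as the tuple (s1, s2, t1, t2).\<close>
type_synonym rect = "real \<times> real \<times> real \<times> real"

definition is_mesh :: "point set \<Rightarrow> bool" where
  "is_mesh D \<longleftrightarrow> (\<exists>S T :: real set. finite S \<and> finite T \<and> {0,1} \<subseteq> S \<and> S \<subseteq> {0..1}
      \<and> {0,1} \<subseteq> T \<and> T \<subseteq> {0..1} \<and> D = S \<times> T)"

definition admissible_domain :: "point set \<Rightarrow> bool" where
  "admissible_domain D \<longleftrightarrow> D = {0..1} \<times> {0..1} \<or> is_mesh D"

definition rect_in :: "point set \<Rightarrow> rect \<Rightarrow> bool" where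
  "rect_in D r = (case r of (s1, s2, t1, t2) \<Rightarrow>
      s1 < s2 \<and> t1 < t2 \<and> (s1, t1) \<in> D \<and> (s2, t2) \<in> D \<and> (s2, t1) \<in> D \<and> (s1, t2) \<in> D)"

definition rect_corners :: "rect \<Rightarrow> point set" where
  "rect_corners r = (case r of (s1, s2, t1, t2) \<Rightarrow> {(s1, t1), (s2, t2), (s2, t1), (s1, t2)})"

definition rect_mult :: "rect \<Rightarrow> point \<Rightarrow> int" where
  "rect_mult r y = (case r of (s1, s2, t1, t2) \<Rightarrow>
      (if y = (s1, t1) \<or> y = (s2, t2) then 1
       else if y = (s2, t1) \<or> y = (s1, t2) then -1 else 0))"

text \<open>Finite formal unions of rectangles (repetitions allowed) are lists of rectangles.\<close>
definition frakR :: "point set \<Rightarrow> rect list set" where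
  "frakR D = {R. R \<noteq> [] \<and> (\<forall>r \<in> set R. rect_in D r)}"

definition mult :: "rect list \<Rightarrow> point \<Rightarrow> int" where
  "mult R y = (\<Sum>r\<leftarrow>R. rect_mult r y)"

definition union_corners :: "rect list \<Rightarrow> point set" where
  "union_corners R = (\<Union>r \<in> set R. rect_corners r)"

text \<open>L^(A,B)(R); the sum is over the finitely many corner points, which contain all
  points of nonzero multiplicity.\<close>
definition Lfun :: "(point \<Rightarrow> real) \<Rightarrow> (point \<Rightarrow> real) \<Rightarrow> rect list \<Rightarrow> real" where
  "Lfun A B R = (\<Sum>y \<in> union_corners R.
      (if mult R y > 0 then B y * of_int (mult R y)
       else if mult R y < 0 then A y * of_int (mult R y) else 0))"

definition PM :: "point set \<Rightarrow> (point \<Rightarrow> real) \<Rightarrow> (point \<Rightarrow> real) \<Rightarrow> point \<Rightarrow> ereal" where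
  "PM D A B x = Inf {ereal (Lfun A B R / of_int (mult R x)) | R. R \<in> frakR D \<and> mult R x > 0}"

definition PO :: "point set \<Rightarrow> (point \<Rightarrow> real) \<Rightarrow> (point \<Rightarrow> real) \<Rightarrow> point \<Rightarrow> ereal" where
  "PO D A B x = Inf {ereal (Lfun A B R / of_int (- mult R x)) | R. R \<in> frakR D \<and> mult R x < 0}"

end

theory Submission
  imports Defs
begin

definition fv :: "(point \<Rightarrow> real) \<Rightarrow> (point \<Rightarrow> real) \<Rightarrow> point \<Rightarrow> int \<Rightarrow> real" where
  "fv A B y m = (if m > 0 then B y * of_int m else if m < 0 then A y * of_int m else 0)"

lemma mult_append: "mult (R1 @ R2) y = mult R1 y + mult R2 y"
  by (simp add: mult_def)

lemma mult_rep: "mult (concat (replicate n R)) y = int n * mult R y"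
  by (induction n) (auto simp: mult_def algebra_simps)

lemma set_rep: "n > 0 \<Longrightarrow> set (concat (replicate n R)) = set R"
  by (induction n) auto

lemma finite_uc: "finite (union_corners R)"
  by (auto simp: union_corners_def rect_corners_def split: prod.splits)

lemma mult_zero: "y \<notin> union_corners R \<Longrightarrow> mult R y = 0"
proof (induction R)
  case Nil then show ?case by (simp add: mult_def)
next
  case (Cons r R)
  obtain s1 s2 t1 t2 where r: "r = (s1,s2,t1,t2)" by (cases r) auto
  from Cons.prems have "y \<notin> rect_corners r" "y \<notin> union_corners R"
    by (auto simp: union_corners_def)
  with Cons.IH have "mult R y = 0" by simp
  moreover have "rect_mult r y = 0" using \<open>y \<notin> rect_corners r\<close>
    by (auto simp: r rect_mult_def rect_corners_def)
  ultimately show ?case by (simp add: mult_def)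
qed

lemma Lfun_sup: "finite V \<Longrightarrow> union_corners R \<subseteq> V \<Longrightarrow>
   Lfun A B R = (\<Sum>y\<in>V. fv A B y (mult R y))"
  unfolding Lfun_def
  apply (rule sum.mono_neutral_cong_left)
  using mult_zero by (auto simp: fv_def)

lemma fv_hom: "k \<ge> 0 \<Longrightarrow> fv A B y (k * m) = of_int k * fv A B y m"
  by (auto simp: fv_def zero_less_mult_iff mult_less_0_iff)

lemma fv_sub: "A y \<le> B y \<Longrightarrow> fv A B y (a + b) \<le> fv A B y a + fv A B y b"
proof -
  assume h: "A y \<le> B y"
  have e: "fv A B y m = B y * real_of_int (max m 0) + A y * real_of_int (min m 0)" for m
    by (auto simp: fv_def)
  define P where "P = real_of_int (max a 0) + real_of_int (max b 0) - real_of_int (max (a+b) 0)"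
  have P: "P \<ge> 0" unfolding P_def by linarith
  have q: "real_of_int (min (a+b) 0) = real_of_int (min a 0) + real_of_int (min b 0) + P"
    unfolding P_def by linarith
  have q2: "real_of_int (max (a+b) 0) = real_of_int (max a 0) + real_of_int (max b 0) - P"
    unfolding P_def by linarith
  have "fv A B y (a + b) = fv A B y a + fv A B y b - (B y - A y) * P"
    unfolding e q q2 by (simp add: algebra_simps)
  moreover have "(B y - A y) * P \<ge> 0" using h P by simp
  ultimately show ?thesis by linarith
qed

lemma uc_sub_D: "R \<in> frakR D \<Longrightarrow> union_corners R \<subseteq> D"
  by (auto simp: frakR_def union_corners_def rect_in_def rect_corners_def split: prod.splits)

lemma key:
  assumes Q1: "\<And>y. y \<in> D \<Longrightarrow> A y \<le> B y"
    and Q2: "\<And>R. R \<in> frakR D \<Longrightarrow> Lfun A B R \<ge> 0"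
    and R1: "R1 \<in> frakR D" and R2: "R2 \<in> frakR D"
    and m1: "mult R1 x > 0" and m2: "mult R2 x < 0"
  shows "Lfun A B R1 / of_int (mult R1 x) + Lfun A B R2 / of_int (- mult R2 x) \<ge> B x - A x"
proof -
  define a where "a = mult R1 x"
  define b where "b = - mult R2 x"
  have a: "a > 0" and b: "b > 0" using m1 m2 by (auto simp: a_def b_def)
  define R where "R = concat (replicate (nat b) R1) @ concat (replicate (nat a) R2)"
  have mR: "mult R y = b * mult R1 y + a * mult R2 y" for y
    using a b by (simp add: R_def mult_append mult_rep)
  have setR: "set R = set R1 \<union> set R2" using a b by (simp add: R_def set_rep)
  have RD: "R \<in> frakR D" using R1 R2 setR by (auto simp: frakR_def)
  define U where "U = union_corners R1 \<union> union_corners R2"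
  have fU: "finite U" by (simp add: U_def finite_uc)
  have UD: "U \<subseteq> D" using uc_sub_D R1 R2 by (auto simp: U_def)
  have ucR: "union_corners R = U" by (simp add: union_corners_def U_def setR)
  have xU: "x \<in> U" using mult_zero[of x R1] m1 by (auto simp: U_def)
  have m1x: "mult R1 x = a" and m2x: "mult R2 x = - b" by (simp_all add: a_def b_def)
  define g where "g y = fv A B y (b * mult R1 y) + fv A B y (a * mult R2 y)" for y
  define h where "h y = fv A B y (mult R y)" for y
  have gh: "\<And>y. y \<in> U \<Longrightarrow> h y \<le> g y" unfolding g_def h_def mR
    using fv_sub Q1 UD by blast
  have hx: "h x = 0" by (simp add: h_def mR m1x m2x fv_def)
  have gx: "g x = of_int a * of_int b * (B x - A x)"
  proof -
    have "b * a > 0" "a * - b < 0" using a b by (simp_all add: mult_pos_neg)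
    then show ?thesis by (simp add: g_def m1x m2x fv_def algebra_simps)
  qed
  have L1: "Lfun A B R1 = (\<Sum>y\<in>U. fv A B y (mult R1 y))"
    by (rule Lfun_sup[OF fU]) (auto simp: U_def)
  have L2: "Lfun A B R2 = (\<Sum>y\<in>U. fv A B y (mult R2 y))"
    by (rule Lfun_sup[OF fU]) (auto simp: U_def)
  have LR: "Lfun A B R = sum h U"
    unfolding h_def by (rule Lfun_sup[OF fU]) (simp add: ucR)
  have bL1: "of_int b * Lfun A B R1 = (\<Sum>y\<in>U. fv A B y (b * mult R1 y))"
    unfolding L1 sum_distrib_left using b by (simp add: fv_hom)
  have aL2: "of_int a * Lfun A B R2 = (\<Sum>y\<in>U. fv A B y (a * mult R2 y))"
    unfolding L2 sum_distrib_left using a by (simp add: fv_hom)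
  have e1: "of_int b * Lfun A B R1 + of_int a * Lfun A B R2 = sum g U"
    unfolding bL1 aL2 g_def by (simp add: sum.distrib)
  have e2: "sum g U = g x + sum g (U - {x})" using fU xU by (simp add: sum.remove)
  have e3: "sum h (U - {x}) \<le> sum g (U - {x})" by (rule sum_mono) (simp add: gh)
  have e4: "sum h U = h x + sum h (U - {x})" using fU xU by (simp add: sum.remove)
  have e5: "Lfun A B R \<ge> 0" using Q2 RD by simp
  have "of_int b * Lfun A B R1 + of_int a * Lfun A B R2 \<ge> of_int a * of_int b * (B x - A x)"
    using e1 e2 e3 e4 e5 LR hx gx by linarith
  then have "(of_int b * Lfun A B R1 + of_int a * Lfun A B R2) / (of_int a * of_int b) \<ge> B x - A x"
    using a b by (simp add: pos_le_divide_eq mult.commute)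
  moreover have "(of_int b * Lfun A B R1 + of_int a * Lfun A B R2) / (of_int a * of_int b)
      = Lfun A B R1 / of_int a + Lfun A B R2 / of_int b"
    using a b by (simp add: field_simps)
  ultimately show ?thesis by (simp add: a_def b_def)
qed

theorem mainTheorem12:
  fixes D :: "point set" and A B :: "point \<Rightarrow> real"
  assumes "admissible_domain D"
    and Q1: "\<And>y. y \<in> D \<Longrightarrow> A y \<le> B y"
    and Q2: "\<And>R. R \<in> frakR D \<Longrightarrow> Lfun A B R \<ge> 0"
    and "x \<in> D"
  shows "PM D A B x + PO D A B x \<ge> ereal (B x - A x)"
proof -
  define S where "S = {ereal (Lfun A B R / of_int (mult R x)) | R. R \<in> frakR D \<and> mult R x > 0}"
  define T where "T = {ereal (Lfun A B R / of_int (- mult R x)) | R. R \<in> frakR D \<and> mult R x < 0}"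
  define c where "c = B x - A x"
  have PM: "PM D A B x = Inf S" by (simp add: PM_def S_def)
  have PO: "PO D A B x = Inf T" by (simp add: PO_def T_def)
  have ST: "\<And>s t. s \<in> S \<Longrightarrow> t \<in> T \<Longrightarrow> ereal c \<le> s + t"
  proof -
    fix s t assume "s \<in> S" "t \<in> T"
    then obtain R1 R2 where "R1 \<in> frakR D" "mult R1 x > 0" "s = ereal (Lfun A B R1 / of_int (mult R1 x))"
        "R2 \<in> frakR D" "mult R2 x < 0" "t = ereal (Lfun A B R2 / of_int (- mult R2 x))"
      unfolding S_def T_def by blast
    note k = key[OF Q1 Q2 \<open>R1 \<in> frakR D\<close> \<open>R2 \<in> frakR D\<close> \<open>mult R1 x > 0\<close> \<open>mult R2 x < 0\<close>]
    show "ereal c \<le> s + t" using k \<open>s = _\<close> \<open>t = _\<close> unfolding c_def by simp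
  qed
  show ?thesis
  proof (cases "S = {} \<or> T = {}")
    case True
    then show ?thesis by (auto simp: PM PO top_ereal_def)
  next
    case False
    then obtain s0 t0 where s0: "s0 \<in> S" and t0: "t0 \<in> T" by blast
    obtain s0r where s0r: "s0 = ereal s0r" using s0 by (auto simp: S_def)
    obtain t0r where t0r: "t0 = ereal t0r" using t0 by (auto simp: T_def)
    have lb1: "ereal (c - t0r) \<le> Inf S"
    proof (rule Inf_greatest)
      fix s assume "s \<in> S"
      then obtain sr where "s = ereal sr" by (auto simp: S_def)
      with ST[OF \<open>s \<in> S\<close> t0] show "ereal (c - t0r) \<le> s" using t0r by simp
    qed
    have ub1: "Inf S \<le> ereal s0r" using s0 s0r by (simp add: Inf_lower)
    obtain p where p: "Inf S = ereal p" using lb1 ub1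
      by (cases "Inf S") auto
    have lb2: "ereal (c - p) \<le> Inf T"
    proof (rule Inf_greatest)
      fix t assume "t \<in> T"
      then obtain tr where tr: "t = ereal tr" by (auto simp: T_def)
      have "\<And>s. s \<in> S \<Longrightarrow> ereal (c - tr) \<le> s"
      proof -
        fix s assume "s \<in> S"
        then obtain sr where "s = ereal sr" by (auto simp: S_def)
        with ST[OF \<open>s \<in> S\<close> \<open>t \<in> T\<close>] show "ereal (c - tr) \<le> s" using tr by simp
      qed
      then have "ereal (c - tr) \<le> Inf S" by (rule Inf_greatest)
      then show "ereal (c - p) \<le> t" using p tr by simp
    qed
    have ub2: "Inf T \<le> ereal t0r" using t0 t0r by (simp add: Inf_lower)
    obtain q where q: "Inf T = ereal q" using lb2 ub2
      by (cases "Inf T") auto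
    show ?thesis using lb2 unfolding PM PO p q c_def by simp
  qed
qed

end
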